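(* For every $n\in\mathbb N$ there exists $N\in\mathbb N$ such that every finite strongly connected digraph $D$ on at least $N$ vertices contains (1) a dipath of length at least $n$, or (2) an $n$-short $(n,0)$-system of dipaths.
   Context: All digraphs are finite; a dipath is a directed path, a dicycle a directed cycle, and lengths count edges. Let $x,y$ be two, possibly equal, vertices and $k,\ell\in\mathbb N$ (with $\ell=0$ allowed). A $(k,\ell)$-system of $x$--$y$ dipaths is a system of $k+\ell$ internally disjoint dipaths (or dicycles through $x$ in case $x=y$), $k$ of which are $x$--$y$ dipaths and $\ell$ of which are $y$--$x$ dipaths; a $(k,\ell)$-system of dipaths is a $(k,\ell)$-system of $x$--$y$ dipaths for some $x,y$. Such a system $\mathcal P$ is $n$-short if, in case $x\ne y$, $|V(P)\cup V(Q)|<n$ for every $x$--$y$ dipath $P\in\mathcal P$ and every $y$--$x$ dipath $Q\in\mathcal P$, and, in case $x=y$, every dicycle in $\mathcal P$ has length less than $n$. *)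

theory Defs
  imports Main
begin

definition digraph :: "'a set \<Rightarrow> ('a \<times> 'a) set \<Rightarrow> bool" where
  "digraph V E \<longleftrightarrow> finite V \<and> E \<subseteq> V \<times> V \<and> (\<forall>v. (v, v) \<notin> E)"

definition strongly_connected :: "'a set \<Rightarrow> ('a \<times> 'a) set \<Rightarrow> bool" where
  "strongly_connected V E \<longleftrightarrow> V \<noteq> {} \<and> (\<forall>u\<in>V. \<forall>v\<in>V. (u, v) \<in> E\<^sup>*)"

definition is_walk :: "'a set \<Rightarrow> ('a \<times> 'a) set \<Rightarrow> 'a list \<Rightarrow> bool" where
  "is_walk V E p \<longleftrightarrow> p \<noteq> [] \<and> set p \<subseteq> V \<and> (\<forall>i. Suc i < length p \<longrightarrow> (p ! i, p ! Suc i) \<in> E)"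

definition dipath :: "'a set \<Rightarrow> ('a \<times> 'a) set \<Rightarrow> 'a list \<Rightarrow> bool" where
  "dipath V E p \<longleftrightarrow> is_walk V E p \<and> distinct p"

definition path_len :: "'a list \<Rightarrow> nat" where
  "path_len p = length p - 1"

text \<open>An x--y dipath for x \<noteq> y; for x = y a dicycle through x, written [x, v1, ..., vk, x].\<close>
definition xy_dipath :: "'a set \<Rightarrow> ('a \<times> 'a) set \<Rightarrow> 'a \<Rightarrow> 'a \<Rightarrow> 'a list \<Rightarrow> bool" where
  "xy_dipath V E x y p \<longleftrightarrow> is_walk V E p \<and> hd p = x \<and> last p = y \<and>
     (if x = y then length p \<ge> 2 \<and> distinct (tl p) else distinct p)"

definition inner :: "'a \<Rightarrow> 'a \<Rightarrow> 'a list \<Rightarrow> 'a set" where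
  "inner x y p = set p - {x, y}"

text \<open>The combined family: indices i < k are the x--y dipaths P i, indices k \<le> i < k + l the
  y--x dipaths Q (i - k).\<close>
definition sys_member :: "nat \<Rightarrow> (nat \<Rightarrow> 'a list) \<Rightarrow> (nat \<Rightarrow> 'a list) \<Rightarrow> nat \<Rightarrow> 'a list" where
  "sys_member k P Q i = (if i < k then P i else Q (i - k))"

definition kl_system :: "'a set \<Rightarrow> ('a \<times> 'a) set \<Rightarrow> 'a \<Rightarrow> 'a \<Rightarrow> nat \<Rightarrow> nat
    \<Rightarrow> (nat \<Rightarrow> 'a list) \<Rightarrow> (nat \<Rightarrow> 'a list) \<Rightarrow> bool" where
  "kl_system V E x y k l P Q \<longleftrightarrow>
     (\<forall>i<k. xy_dipath V E x y (P i)) \<and> (\<forall>j<l. xy_dipath V E y x (Q j)) \<and>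
     (\<forall>i<k+l. \<forall>j<k+l. i \<noteq> j \<longrightarrow>
        sys_member k P Q i \<noteq> sys_member k P Q j \<and>
        inner x y (sys_member k P Q i) \<inter> inner x y (sys_member k P Q j) = {})"

definition n_short :: "nat \<Rightarrow> 'a \<Rightarrow> 'a \<Rightarrow> nat \<Rightarrow> nat
    \<Rightarrow> (nat \<Rightarrow> 'a list) \<Rightarrow> (nat \<Rightarrow> 'a list) \<Rightarrow> bool" where
  "n_short n x y k l P Q \<longleftrightarrow>
     (if x \<noteq> y then (\<forall>i<k. \<forall>j<l. card (set (P i) \<union> set (Q j)) < n)
      else (\<forall>i<k+l. path_len (sys_member k P Q i) < n))"

end

theory Submission
  imports Defs
begin

lemma walk_Cons2: "is_walk V E (a # b # p) \<longleftrightarrow> a \<in> V \<and> (a,b) \<in> E \<and> is_walk V E (b # p)"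
proof
  assume h: "is_walk V E (a # b # p)"
  have hh: "\<And>i. Suc i < length (a # b # p) \<Longrightarrow> ((a # b # p) ! i, (a # b # p) ! Suc i) \<in> E"
    using h unfolding is_walk_def by blast
  have "(a,b) \<in> E" using hh[of 0] by simp
  moreover have "is_walk V E (b # p)" unfolding is_walk_def
  proof (intro conjI allI impI)
    fix i assume "Suc i < length (b # p)"
    then show "((b # p) ! i, (b # p) ! Suc i) \<in> E" using hh[of "Suc i"] by simp
  qed (use h in \<open>auto simp: is_walk_def\<close>)
  ultimately show "a \<in> V \<and> (a,b) \<in> E \<and> is_walk V E (b # p)" using h unfolding is_walk_def by auto
next
  assume h: "a \<in> V \<and> (a,b) \<in> E \<and> is_walk V E (b # p)"
  show "is_walk V E (a # b # p)" unfolding is_walk_def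
  proof (intro conjI allI impI)
    fix i assume "Suc i < length (a # b # p)"
    then show "((a # b # p) ! i, (a # b # p) ! Suc i) \<in> E" using h unfolding is_walk_def
      by (cases i) auto
  qed (use h in \<open>auto simp: is_walk_def\<close>)
qed

lemma walk_single[simp]: "is_walk V E [a] \<longleftrightarrow> a \<in> V"
  by (simp add: is_walk_def)

lemma walk_append: "p \<noteq> [] \<Longrightarrow> q \<noteq> [] \<Longrightarrow>
  is_walk V E (p @ q) \<longleftrightarrow> is_walk V E p \<and> is_walk V E q \<and> (last p, hd q) \<in> E"
proof (induction p)
  case Nil then show ?case by simp
next
  case (Cons a p)
  show ?case
  proof (cases p)
    case Nil
    then obtain b q' where "q = b # q'" using Cons by (cases q) auto
    then show ?thesis using Nil by (auto simp: walk_Cons2)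
  next
    case (Cons c p')
    have ih: "is_walk V E (p @ q) \<longleftrightarrow> is_walk V E p \<and> is_walk V E q \<and> (last p, hd q) \<in> E"
      using Cons.IH Cons.prems Cons by simp
    have eq1: "is_walk V E (a # p @ q) \<longleftrightarrow> a \<in> V \<and> (a,c) \<in> E \<and> is_walk V E (p @ q)"
      using walk_Cons2[of V E a c "p' @ q"] Cons by simp
    have eq2: "is_walk V E (a # p) \<longleftrightarrow> a \<in> V \<and> (a,c) \<in> E \<and> is_walk V E p"
      using walk_Cons2[of V E a c "p'"] Cons by simp
    show ?thesis using ih eq1 eq2 Cons by auto
  qed
qed

lemma walk_take: "is_walk V E p \<Longrightarrow> 0 < k \<Longrightarrow> is_walk V E (take k p)"
  unfolding is_walk_def by (auto simp: nth_take dest: in_set_takeD)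

lemma walk_drop: "is_walk V E p \<Longrightarrow> k < length p \<Longrightarrow> is_walk V E (drop k p)"
  unfolding is_walk_def by (auto simp: nth_drop dest: in_set_dropD)

lemma walk_to_dipath: "is_walk V E p \<Longrightarrow>
  \<exists>q. dipath V E q \<and> hd q = hd p \<and> last q = last p \<and> length q \<le> length p"
proof (induction p)
  case Nil then show ?case by (simp add: is_walk_def)
next
  case (Cons x p)
  show ?case
  proof (cases p)
    case Nil then show ?thesis using Cons by (intro exI[of _ "[x]"]) (auto simp: dipath_def is_walk_def)
  next
    case (Cons y p')
    then have wp: "is_walk V E p" and xV: "x \<in> V" and xy: "(x,y) \<in> E" using Cons.prems by (auto simp: walk_Cons2)
    then obtain q where q: "dipath V E q" "hd q = hd p" "last q = last p" "length q \<le> length p"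
      using Cons.IH by blast
    have qne: "q \<noteq> []" using q(1) by (auto simp: dipath_def is_walk_def)
    show ?thesis
    proof (cases "x \<in> set q")
      case True
      then obtain k where k: "k < length q" "q ! k = x" by (auto simp: in_set_conv_nth)
      let ?r = "drop k q"
      have "dipath V E ?r" using q(1) k by (auto simp: dipath_def walk_drop)
      moreover have "hd ?r = x" using k by (simp add: hd_drop_conv_nth)
      moreover have "last ?r = last q" using k by simp
      ultimately show ?thesis using q Cons by (intro exI[of _ ?r]) auto
    next
      case False
      obtain b q' where bq: "q = b # q'" using qne by (cases q) auto
      have "b = y" using q(2) bq Cons by simp
      then have "is_walk V E (x # q)" using q(1) bq xV xy by (auto simp: dipath_def walk_Cons2)
      then have "dipath V E (x # q)" using q(1) False by (auto simp: dipath_def)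
      then show ?thesis using q qne Cons by (intro exI[of _ "x # q"]) auto
    qed
  qed
qed

lemma rtrancl_walk: "(u,v) \<in> E\<^sup>* \<Longrightarrow> v \<in> V \<Longrightarrow> E \<subseteq> V \<times> V \<Longrightarrow>
   \<exists>p. is_walk V E p \<and> hd p = u \<and> last p = v"
proof (induction rule: converse_rtrancl_induct)
  case base then show ?case by (intro exI[of _ "[v]"]) auto
next
  case (step y z)
  then obtain p where p: "is_walk V E p" "hd p = z" "last p = v" by blast
  then obtain p' where "p = z # p'" by (cases p) (auto simp: is_walk_def)
  then have "is_walk V E (y # p)" using p step by (auto simp: walk_Cons2)
  then show ?case using p \<open>p = z # p'\<close> by (intro exI[of _ "y # p"]) auto
qed


fun R :: "('a \<times> 'a) set \<Rightarrow> 'a \<Rightarrow> nat \<Rightarrow> 'a set" where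
  "R E r 0 = {r}"
| "R E r (Suc k) = R E r k \<union> E `` R E r k"

lemma walk_R: "is_walk V E p \<Longrightarrow> hd p = r \<Longrightarrow> last p \<in> R E r (length p - 1)"
proof (induction p rule: rev_induct)
  case Nil then show ?case by (simp add: is_walk_def)
next
  case (snoc x p)
  show ?case
  proof (cases "p = []")
    case True then show ?thesis using snoc by simp
  next
    case False
    then have w: "is_walk V E p" "(last p, x) \<in> E" using snoc.prems walk_append[of p "[x]"] by auto
    have "last p \<in> R E r (length p - 1)" using snoc.IH w False snoc.prems by simp
    then have "x \<in> R E r (Suc (length p - 1))" using w by auto
    then show ?thesis using False by simp
  qed
qed

lemma R_mono: "k \<le> l \<Longrightarrow> R E r k \<subseteq> R E r l"
  by (induction l) (auto simp: le_Suc_eq)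

lemma R_sub: "r \<in> V \<Longrightarrow> E \<subseteq> V \<times> V \<Longrightarrow> R E r k \<subseteq> V"
  by (induction k) auto

lemma R_card:
  assumes "finite V" "E \<subseteq> V \<times> V" "r \<in> V" "\<forall>v\<in>V. card (E `` {v}) \<le> D"
  shows "card (R E r k) \<le> (D+1)^k"
proof (induction k)
  case 0 then show ?case by simp
next
  case (Suc k)
  have fin: "finite (R E r k)" using R_sub[OF assms(3,2)] assms(1) finite_subset by blast
  have "card (E `` R E r k) = card (\<Union>v\<in>R E r k. E `` {v})" by (metis Image_eq_UN)
  also have "\<dots> \<le> (\<Sum>v\<in>R E r k. card (E `` {v}))" using card_UN_le fin by blast
  also have "\<dots> \<le> card (R E r k) * D"
    using sum_bounded_above[of "R E r k" "\<lambda>v. card (E `` {v})" D] assms(4) R_sub[OF assms(3,2)] by auto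
  finally have c1: "card (E `` R E r k) \<le> card (R E r k) * D" .
  have "card (R E r (Suc k)) \<le> card (R E r k) + card (E `` R E r k)" by (simp add: card_Un_le)
  also have "\<dots> \<le> card (R E r k) * (D+1)" using c1 by simp
  also have "\<dots> \<le> (D+1)^k * (D+1)" using Suc mult_le_mono1 by blast
  finally show ?case by (simp add: mult.commute)
qed

lemma deg_bound:
  assumes dg: "digraph V E" and sc: "strongly_connected V E"
    and short: "\<forall>p. dipath V E p \<longrightarrow> path_len p < n"
    and deg: "\<forall>v\<in>V. card (E `` {v}) \<le> D"
  shows "card V \<le> (D+1)^(n-1)"
proof -
  obtain r where r: "r \<in> V" using sc by (auto simp: strongly_connected_def)
  have fin: "finite V" and EV: "E \<subseteq> V \<times> V" using dg by (auto simp: digraph_def)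
  have "V \<subseteq> R E r (n-1)"
  proof
    fix v assume v: "v \<in> V"
    have "(r,v) \<in> E\<^sup>*" using sc r v by (auto simp: strongly_connected_def)
    then obtain p where "is_walk V E p" "hd p = r" "last p = v" using rtrancl_walk v EV by metis
    then obtain q where q: "dipath V E q" "hd q = r" "last q = v" using walk_to_dipath by metis
    have "v \<in> R E r (length q - 1)" using walk_R[of V E q r] q by (auto simp: dipath_def)
    moreover have "length q - 1 \<le> n - 1" using short q(1) by (auto simp: path_len_def)
    ultimately show "v \<in> R E r (n-1)" using R_mono[of "length q - 1" "n-1" E r] by (meson subsetD)
  qed
  then have "card V \<le> card (R E r (n-1))"
    using card_mono[OF finite_subset[OF R_sub[OF r EV] fin]] by blast
  also have "\<dots> \<le> (D+1)^(n-1)" using R_card[OF fin EV r deg] .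
  finally show ?thesis .
qed


definition trunc :: "'a \<Rightarrow> 'a list \<Rightarrow> 'a list" where
  "trunc z p = takeWhile (\<lambda>v. v \<noteq> z) p @ [z]"

definition pwd :: "'a \<Rightarrow> 'a \<Rightarrow> 'a list set \<Rightarrow> bool" where
  "pwd x t H \<longleftrightarrow> (\<forall>p\<in>H. \<forall>q\<in>H. p \<noteq> q \<longrightarrow> inner x t p \<inter> inner x t q = {})"

lemma tw_aux: "z \<notin> set a \<Longrightarrow> takeWhile (\<lambda>v. v \<noteq> z) (a @ z # b) = a"
  by (induct a) auto

lemma trunc_lemma:
  assumes p: "xy_dipath V E x t p" and z: "z \<in> set p" "z \<noteq> x" "z \<noteq> t"
  shows "xy_dipath V E x z (trunc z p) \<and> length (trunc z p) < length p \<and> trunc z p ! 1 = p ! 1"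
proof -
  obtain a b where ab: "p = a @ z # b" using split_list z(1) by metis
  have w: "is_walk V E p" "hd p = x" "last p = t" using p by (auto simp: xy_dipath_def)
  have ane: "a \<noteq> []" using ab w z by auto
  then obtain a' where a': "a = x # a'" using ab w by (cases a) auto
  have bne: "b \<noteq> []" using ab w z by auto
  have dist: "distinct (a' @ z # b)"
    using p ab a' by (auto simp: xy_dipath_def split: if_splits)
  have xa: "x \<notin> set a'"
  proof (cases "x = t")
    case True
    then have "x \<in> set b" using w ab bne by (metis last_ConsR last_appendR last_in_set list.distinct(1))
    then show ?thesis using dist by auto
  next
    case False
    then show ?thesis using p ab a' by (auto simp: xy_dipath_def)
  qed
  have za: "z \<notin> set a" using dist a' z by auto
  have tr: "trunc z p = a @ [z]" unfolding trunc_def ab using tw_aux[OF za] by simp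
  have "is_walk V E ((a @ [z]) @ b)" using w ab by simp
  then have wa: "is_walk V E (a @ [z])" using walk_append[of "a @ [z]" b] bne by simp
  have "xy_dipath V E x z (a @ [z])"
    unfolding xy_dipath_def using wa a' z dist xa by auto
  moreover have "length (a @ [z]) < length p" using ab bne by simp
  moreover have "(a @ [z]) ! 1 = p ! 1" using ab a' by (cases a') auto
  ultimately show ?thesis using tr by simp
qed

lemma inner_card: "card (inner x t p) \<le> length p"
  unfolding inner_def by (meson List.finite_set card_length card_mono Diff_subset order_trans)

lemma step:
  assumes fin: "finite F" and fam: "\<forall>p\<in>F. xy_dipath V E x t p \<and> length p \<le> Suc k"
    and inj: "inj_on (\<lambda>p. p!1) F" and big: "card F \<ge> m + m * Suc k * c"
  shows "(\<exists>H\<subseteq>F. card H = m \<and> pwd x t H) \<or>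
    (\<exists>z F'. z \<noteq> x \<and> z \<noteq> t \<and> finite F' \<and> (\<forall>p\<in>F'. xy_dipath V E x z p \<and> length p \<le> k)
       \<and> inj_on (\<lambda>p. p!1) F' \<and> card F' \<ge> c)"
proof -
  let ?P = "\<lambda>H. H \<subseteq> F \<and> pwd x t H"
  have P0: "?P {}" by (simp add: pwd_def)
  have "\<forall>y. ?P y \<longrightarrow> card y < Suc (card F)" using fin by (auto intro: le_imp_less_Suc card_mono)
  then obtain H where H: "?P H" and Hmax: "\<forall>H'. ?P H' \<longrightarrow> card H' \<le> card H"
    using Lattices_Big.ex_has_greatest_nat[of ?P "{}" card "Suc (card F)"] P0 by blast
  have finH: "finite H" using H fin finite_subset by blast
  show ?thesis
  proof (cases "card H \<ge> m")
    case True
    then obtain H' where "H' \<subseteq> H" "card H' = m" by (meson obtain_subset_with_card_n)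
    then have "H' \<subseteq> F \<and> card H' = m \<and> pwd x t H'" using H unfolding pwd_def by (metis disjoint_iff subset_iff)
    then show ?thesis by blast
  next
    case False
    define U where "U = (\<Union>p\<in>H. inner x t p)"
    define A where "A = (\<lambda>z. {p\<in>F. z \<in> inner x t p})"
    have "card U \<le> (\<Sum>p\<in>H. card (inner x t p))" unfolding U_def using card_UN_le finH by blast
    also have "\<dots> \<le> card H * Suc k"
      using sum_bounded_above[of H "\<lambda>p. card (inner x t p)" "Suc k"] H fam inner_card
      by (metis (no_types, lifting) in_mono le_trans of_nat_id)
    also have "\<dots> \<le> m * Suc k" using False mult_le_mono1 by (metis less_or_eq_imp_le not_le)
    finally have cardU: "card U \<le> m * Suc k" .
    have finU: "finite U" unfolding U_def inner_def using finH by auto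
    have cover: "F - H \<subseteq> (\<Union>z\<in>U. A z)"
    proof
      fix p assume p: "p \<in> F - H"
      have "\<not> ?P (insert p H)"
      proof
        assume "?P (insert p H)"
        then have "card (insert p H) \<le> card H" using Hmax by blast
        then show False using p finH by simp
      qed
      then have "\<not> pwd x t (insert p H)" using p H by simp
      then obtain q where q: "q \<in> H" "inner x t p \<inter> inner x t q \<noteq> {}"
        using H p unfolding pwd_def by (metis Int_commute insert_iff)
      then obtain z where "z \<in> inner x t p" "z \<in> inner x t q" by blast
      then show "p \<in> (\<Union>z\<in>U. A z)" using q p unfolding U_def A_def by blast
    qed
    have "\<exists>z\<in>U. card (A z) \<ge> c"
    proof (rule ccontr)
      assume "\<not> ?thesis"
      then have lt: "\<forall>z\<in>U. card (A z) \<le> c" by auto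
      have "card (F - H) \<le> card (\<Union>z\<in>U. A z)"
        using cover card_mono finU fin unfolding A_def by (simp add: card_mono)
      also have "\<dots> \<le> (\<Sum>z\<in>U. card (A z))" using card_UN_le finU by blast
      also have "\<dots> \<le> card U * c" using sum_bounded_above[of U "\<lambda>z. card (A z)" c] lt by simp
      also have "\<dots> \<le> m * Suc k * c" using cardU by simp
      finally have "card (F - H) \<le> m * Suc k * c" .
      moreover have "card (F - H) = card F - card H" using H finH by (simp add: card_Diff_subset)
      moreover have "card H \<le> card F" using H fin card_mono by blast
      ultimately have "card F < m + m * Suc k * c" using False by linarith
      then show False using big by simp
    qed
    then obtain z where zU: "z \<in> U" and cz: "card (A z) \<ge> c" by blast
    obtain q where "q \<in> H" "z \<in> inner x t q" using zU unfolding U_def by blast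
    then have zx: "z \<noteq> x" "z \<noteq> t" by (auto simp: inner_def)
    have tprop: "\<forall>p\<in>A z. xy_dipath V E x z (trunc z p) \<and> length (trunc z p) \<le> k \<and> trunc z p ! 1 = p ! 1"
    proof
      fix p assume p: "p \<in> A z"
      then have "xy_dipath V E x t p" "length p \<le> Suc k" "z \<in> set p" using fam unfolding A_def inner_def by auto
      then show "xy_dipath V E x z (trunc z p) \<and> length (trunc z p) \<le> k \<and> trunc z p ! 1 = p ! 1"
        using trunc_lemma[of V E x t p z] zx by auto
    qed
    have AF: "A z \<subseteq> F" unfolding A_def by auto
    have injA: "inj_on (\<lambda>p. p!1) (A z)" using inj_on_subset[OF inj AF] .
    have injT: "inj_on (trunc z) (A z)"
      unfolding inj_on_def using injA tprop unfolding inj_on_def by metis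
    define F' where "F' = trunc z ` A z"
    have "card F' = card (A z)" unfolding F'_def using card_image injT by blast
    moreover have "finite F'" unfolding F'_def using fin AF finite_subset by blast
    moreover have "\<forall>p\<in>F'. xy_dipath V E x z p \<and> length p \<le> k" unfolding F'_def using tprop by auto
    moreover have "inj_on (\<lambda>p. p!1) F'"
      unfolding F'_def inj_on_def using injA tprop unfolding inj_on_def by (smt (verit) imageE)
    ultimately show ?thesis using zx cz by metis
  qed
qed

fun G :: "nat \<Rightarrow> nat \<Rightarrow> nat" where
  "G 0 m = 1"
| "G (Suc k) m = m + m * Suc (Suc k) * G k m"

lemma L: "\<forall>t F. x \<noteq> t \<longrightarrow> finite F \<longrightarrow> (\<forall>p\<in>F. xy_dipath V E x t p \<and> length p \<le> Suc k)
   \<longrightarrow> inj_on (\<lambda>p. p!1) F \<longrightarrow> card F \<ge> G k m \<longrightarrow>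
   (\<exists>y H. y \<noteq> x \<and> finite H \<and> H \<subseteq> {p. xy_dipath V E x y p} \<and> card H = m \<and> pwd x y H)"
proof (induction k)
  case 0
  show ?case
  proof (intro allI impI)
    fix t and F :: "'a list set"
    assume a: "x \<noteq> t" "finite F" "\<forall>p\<in>F. xy_dipath V E x t p \<and> length p \<le> Suc 0" "card F \<ge> G 0 m"
    then obtain p where p: "p \<in> F" by fastforce
    then have "xy_dipath V E x t p" "length p \<le> 1" using a by auto
    then obtain v where "p = [v]" "hd p = x" "last p = t"
      unfolding xy_dipath_def is_walk_def by (cases p) auto
    then show "\<exists>y H. y \<noteq> x \<and> finite H \<and> H \<subseteq> {p. xy_dipath V E x y p} \<and> card H = m \<and> pwd x y H"
      using a by simp
  qed
next
  case (Suc k)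
  show ?case
  proof (intro allI impI)
    fix t and F :: "'a list set"
    assume a: "x \<noteq> t" "finite F" "\<forall>p\<in>F. xy_dipath V E x t p \<and> length p \<le> Suc (Suc k)"
      "inj_on (\<lambda>p. p!1) F" "card F \<ge> G (Suc k) m"
    have "card F \<ge> m + m * Suc (Suc k) * G k m" using a by simp
    from step[OF a(2) a(3) a(4) this]
    show "\<exists>y H. y \<noteq> x \<and> finite H \<and> H \<subseteq> {p. xy_dipath V E x y p} \<and> card H = m \<and> pwd x y H"
    proof
      assume "\<exists>H\<subseteq>F. card H = m \<and> pwd x t H"
      then obtain H where "H \<subseteq> F" "card H = m" "pwd x t H" by blast
      then show ?thesis using a finite_subset by (intro exI[of _ t] exI[of _ H]) auto
    next
      assume "\<exists>z F'. z \<noteq> x \<and> z \<noteq> t \<and> finite F' \<and> (\<forall>p\<in>F'. xy_dipath V E x z p \<and> length p \<le> Suc k)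
       \<and> inj_on (\<lambda>p. p!1) F' \<and> card F' \<ge> G k m"
      then show ?thesis using Suc.IH by metis
    qed
  qed
qed

lemma build:
  assumes "finite H" "card H = m" "H \<subseteq> {p. xy_dipath V E x y p}" "pwd x y H"
    "x = y \<longrightarrow> (\<forall>p\<in>H. path_len p < m)"
  shows "\<exists>P Q. kl_system V E x y m 0 P Q \<and> n_short m x y m 0 P Q"
proof -
  obtain h where h: "bij_betw h {0..<m} H" using ex_bij_betw_nat_finite assms(1,2) by blast
  have hi: "\<And>i. i < m \<Longrightarrow> h i \<in> H" using h by (auto simp: bij_betw_def)
  have hinj: "\<And>i j. i < m \<Longrightarrow> j < m \<Longrightarrow> i \<noteq> j \<Longrightarrow> h i \<noteq> h j"
    using h by (auto simp: bij_betw_def inj_on_def)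
  have "kl_system V E x y m 0 h h"
    unfolding kl_system_def sys_member_def using hi hinj assms(3,4) unfolding pwd_def by auto
  moreover have "n_short m x y m 0 h h"
    unfolding n_short_def sys_member_def using hi assms(5) by auto
  ultimately show ?thesis by blast
qed


lemma main2:
  assumes n2: "n \<ge> 2" and dg: "digraph V E" and sc: "strongly_connected V E"
    and big: "card V \<ge> (n + n * Suc n * G (n-1) n)^(n-1) + 1"
  shows "(\<exists>p. dipath V E p \<and> path_len p \<ge> n) \<or>
     (\<exists>x y P Q. kl_system V E x y n 0 P Q \<and> n_short n x y n 0 P Q)"
proof (cases "\<exists>p. dipath V E p \<and> path_len p \<ge> n")
  case True then show ?thesis by blast
next
  case False
  then have short: "\<forall>p. dipath V E p \<longrightarrow> path_len p < n" by (auto simp: not_le)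
  define M where "M = n + n * Suc n * G (n-1) n"
  have M1: "M \<ge> 1" using n2 unfolding M_def by simp
  have fin: "finite V" and EV: "E \<subseteq> V \<times> V" and noloop: "\<forall>v. (v,v) \<notin> E" using dg by (auto simp: digraph_def)
  obtain x where xV: "x \<in> V" and degx: "card (E `` {x}) \<ge> M"
  proof (rule ccontr)
    assume "\<not> thesis"
    then have "\<forall>v\<in>V. card (E `` {v}) \<le> M - 1" using that by force
    then have "card V \<le> (M - 1 + 1)^(n-1)" using deg_bound[OF dg sc short] by blast
    moreover have "M - 1 + 1 = M" using M1 by simp
    ultimately have "card V \<le> M^(n-1)" by simp
    then show False using big unfolding M_def by simp
  qed
  define S where "S = E `` {x}"
  have SV: "S \<subseteq> V" using EV unfolding S_def by auto
  have finS: "finite S" using SV fin finite_subset by blast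
  have "\<forall>s\<in>S. \<exists>q. dipath V E q \<and> hd q = s \<and> last q = x"
  proof
    fix s assume s: "s \<in> S"
    then have "(s,x) \<in> E\<^sup>*" using sc SV xV by (auto simp: strongly_connected_def)
    then obtain p where "is_walk V E p" "hd p = s" "last p = x" using rtrancl_walk xV EV by metis
    then show "\<exists>q. dipath V E q \<and> hd q = s \<and> last q = x" using walk_to_dipath by metis
  qed
  then obtain cc where cc: "\<forall>s\<in>S. dipath V E (cc s) \<and> hd (cc s) = s \<and> last (cc s) = x" by metis
  have props: "\<forall>s\<in>S. xy_dipath V E x x (x # cc s) \<and> length (x # cc s) \<le> Suc n \<and> (x # cc s) ! 1 = s
      \<and> cc s \<noteq> [] \<and> s \<noteq> x \<and> (x, s) \<in> E"
  proof
    fix s assume s: "s \<in> S"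
    have d: "dipath V E (cc s)" "hd (cc s) = s" "last (cc s) = x" using cc s by auto
    have ne: "cc s \<noteq> []" using d by (auto simp: dipath_def is_walk_def)
    then obtain r where r: "cc s = s # r" using d by (cases "cc s") auto
    have xs: "(x, s) \<in> E" using s unfolding S_def by auto
    have "is_walk V E (x # cc s)" using r xs xV d walk_Cons2[of V E x s r] by (auto simp: dipath_def)
    then have "xy_dipath V E x x (x # cc s)" using d ne r by (auto simp: xy_dipath_def dipath_def)
    moreover have "length (cc s) \<le> n" using short d by (auto simp: path_len_def)
    ultimately show "xy_dipath V E x x (x # cc s) \<and> length (x # cc s) \<le> Suc n \<and> (x # cc s) ! 1 = s
      \<and> cc s \<noteq> [] \<and> s \<noteq> x \<and> (x, s) \<in> E" using r xs noloop by auto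
  qed
  define F0 where "F0 = (\<lambda>s. x # cc s) ` S"
  have inj1: "inj_on (\<lambda>s. x # cc s) S" unfolding inj_on_def using props by metis
  have cardF0: "card F0 \<ge> M" unfolding F0_def using card_image[OF inj1] degx S_def by simp
  have finF0: "finite F0" unfolding F0_def using finS by simp
  have famF0: "\<forall>p\<in>F0. xy_dipath V E x x p \<and> length p \<le> Suc n" unfolding F0_def using props by auto
  have injF0: "inj_on (\<lambda>p. p!1) F0" unfolding F0_def inj_on_def using props by auto
  from step[OF finF0 famF0 injF0, of n "G (n-1) n"] cardF0
  have "(\<exists>H\<subseteq>F0. card H = n \<and> pwd x x H) \<or>
    (\<exists>z F'. z \<noteq> x \<and> z \<noteq> x \<and> finite F' \<and> (\<forall>p\<in>F'. xy_dipath V E x z p \<and> length p \<le> n)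
       \<and> inj_on (\<lambda>p. p!1) F' \<and> card F' \<ge> G (n-1) n)" unfolding M_def by simp
  then show ?thesis
  proof
    assume "\<exists>z F'. z \<noteq> x \<and> z \<noteq> x \<and> finite F' \<and> (\<forall>p\<in>F'. xy_dipath V E x z p \<and> length p \<le> n)
       \<and> inj_on (\<lambda>p. p!1) F' \<and> card F' \<ge> G (n-1) n"
    then obtain z F' where zF: "z \<noteq> x" "finite F'" "\<forall>p\<in>F'. xy_dipath V E x z p \<and> length p \<le> Suc (n-1)"
       "inj_on (\<lambda>p. p!1) F'" "card F' \<ge> G (n-1) n" using n2 by auto
    then obtain y H where "y \<noteq> x" "finite H" "H \<subseteq> {p. xy_dipath V E x y p}" "card H = n" "pwd x y H"
      using L[of x V E "n-1" n] by metis
    then show ?thesis using build[of H n V E x y] by blast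
  next
    assume "\<exists>H\<subseteq>F0. card H = n \<and> pwd x x H"
    then obtain H where H: "H \<subseteq> F0" "card H = n" "pwd x x H" by blast
    have finH: "finite H" using H finF0 finite_subset by blast
    show ?thesis
    proof (cases "\<forall>p\<in>H. path_len p < n")
      case True
      then show ?thesis using build[of H n V E x x] H finH famF0 by blast
    next
      case False
      then obtain p0 where p0: "p0 \<in> H" "path_len p0 \<ge> n" by (auto simp: not_less)
      have "card (H - {p0}) \<ge> 1" using H(2) n2 p0(1) finH by simp
      then obtain q0 where q0: "q0 \<in> H" "q0 \<noteq> p0" by (metis Diff_iff card_0_eq finH finite_Diff insertI1 not_one_le_zero subsetI subset_empty)
      obtain s0 where s0: "s0 \<in> S" "p0 = x # cc s0" using p0 H unfolding F0_def by auto
      obtain s1 where s1: "s1 \<in> S" "q0 = x # cc s1" using q0 H unfolding F0_def by auto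
      define c where "c = cc s0"
      define d where "d = cc s1"
      have dc: "dipath V E c" "last c = x" "c \<noteq> []" using cc props s0 unfolding c_def by auto
      have dd: "dipath V E d" "hd d = s1" "last d = x" "d \<noteq> []" "s1 \<noteq> x" "(x, s1) \<in> E"
        using cc props s1 unfolding d_def by auto
      have lc: "length c \<ge> n" using p0 s0 unfolding c_def path_len_def by simp
      obtain a b r where dabr: "d = a # b # r" using dd
        by (metis last_ConsL list.exhaust_sel list.sel(1))
      have bd: "butlast d \<noteq> []" "hd (butlast d) = s1" using dabr dd by auto
      have wbd: "is_walk V E (butlast d)" using dd walk_take[of V E d "length d - 1"] dabr
        by (auto simp: dipath_def butlast_conv_take)
      have wl: "is_walk V E (c @ butlast d)" using walk_append[of c "butlast d"] dc bd wbd dd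
        by (auto simp: dipath_def)
      have xnot: "x \<notin> set (butlast d)"
        using dd append_butlast_last_id[of d] by (metis dipath_def distinct_append disjoint_iff list.set_intros(1) set_ConsD)
      have disj: "set c \<inter> set (butlast d) = {}"
      proof (rule ccontr)
        assume "set c \<inter> set (butlast d) \<noteq> {}"
        then obtain v where v: "v \<in> set c" "v \<in> set (butlast d)" by blast
        then have "v \<noteq> x" using xnot by auto
        then have "v \<in> inner x x p0" "v \<in> inner x x q0" using v s0 s1 in_set_butlastD
          unfolding c_def d_def inner_def by fastforce+
        then show False using H(3) p0(1) q0 unfolding pwd_def by blast
      qed
      have "dipath V E (c @ butlast d)" using wl disj dc dd by (auto simp: dipath_def distinct_butlast)
      moreover have "path_len (c @ butlast d) \<ge> n" using lc bd unfolding path_len_def by (cases "butlast d") auto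
      ultimately show ?thesis by blast
    qed
  qed
qed

theorem theorem3p3:
  shows "\<forall>n::nat. \<exists>N::nat. \<forall>(V::'a set) E. digraph V E \<and> strongly_connected V E \<and> card V \<ge> N \<longrightarrow>
     (\<exists>p. dipath V E p \<and> path_len p \<ge> n) \<or>
     (\<exists>x y P Q. kl_system V E x y n 0 P Q \<and> n_short n x y n 0 P Q)"
proof
  fix n :: nat
  show "\<exists>N::nat. \<forall>(V::'a set) E. digraph V E \<and> strongly_connected V E \<and> card V \<ge> N \<longrightarrow>
     (\<exists>p. dipath V E p \<and> path_len p \<ge> n) \<or>
     (\<exists>x y P Q. kl_system V E x y n 0 P Q \<and> n_short n x y n 0 P Q)"
  proof (cases "n \<ge> 2")
    case True
    then show ?thesis using main2 by blast
  next
    case False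
    show ?thesis
    proof (intro exI[of _ 2] allI impI)
      fix V :: "'a set" and E
      assume a: "digraph V E \<and> strongly_connected V E \<and> 2 \<le> card V"
      have fV: "finite V" using a by (simp add: digraph_def)
      have "V \<noteq> {}" using a by auto
      then obtain u where u: "u \<in> V" by blast
      have "card (V - {u}) \<ge> 1" using a u fV by (auto simp add: card_Diff_singleton)
      then obtain v where "v \<in> V - {u}" by (metis card.empty ex_in_conv not_one_le_zero)
      then have uv: "u \<in> V" "v \<in> V" "u \<noteq> v" using u by auto
      have EV: "E \<subseteq> V \<times> V" using a by (auto simp: digraph_def)
      have "(u,v) \<in> E\<^sup>*" using a uv by (auto simp: strongly_connected_def)
      then obtain p where "is_walk V E p" "hd p = u" "last p = v" using rtrancl_walk uv EV by metis
      then obtain q where q: "dipath V E q" "hd q = u" "last q = v" using walk_to_dipath by metis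
      have "length q \<ge> 2" using q uv by (cases q rule: remdups_adj.cases) (auto simp: dipath_def is_walk_def)
      then have "path_len q \<ge> n" using False by (simp add: path_len_def)
      then show "(\<exists>p. dipath V E p \<and> path_len p \<ge> n) \<or>
         (\<exists>x y P Q. kl_system V E x y n 0 P Q \<and> n_short n x y n 0 P Q)" using q by blast
    qed
  qed
qed

end
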